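(* Let $A, C, D$ be binary random variables, with $A$ taking values $a,\overline{a}$, $C$ taking values $c,\overline{c}$, $D$ taking values $d,\overline{d}$, and let $Y$ be a real random variable with finite expectation. Suppose the joint distribution factorizes as \[ p(A,C,D,Y)=p(D)\,p(C\mid D)\,p(A\mid C)\,p(Y\mid A,C). \] Assume that $C$ and $D$ are dependent, and that every event $\{A=x, C=y, D=z\}$ has positive probability. For $x\in\{a,\overline{a}\}$ let $E[Y_x]=E[Y|x,c]p(c)+E[Y|x,\overline{c}]p(\overline{c})$, and let $S_x$ denote either $S_x=E[Y|x,d]p(d)+E[Y|x,\overline{d}]p(\overline{d})$ or $S_x=E[Y|x]$ (the claim holds for each of these two choices). Then: (i) if $E[Y\mid a,D]$ and $E[A\mid D]$ are both nondecreasing or both nonincreasing in $D$, then $S_a\ge E[Y_a]$; if they are one nondecreasing and the other nonincreasing in $D$, then $S_a\le E[Y_a]$; (ii) if $E[Y\mid \overline{a},D]$ and $E[A\mid D]$ are both nondecreasing or both nonincreasing in $D$, then $S_{\overline{a}}\le E[Y_{\overline{a}}]$; if they are one nondecreasing and the other nonincreasing in $D$, then $S_{\overline{a}}\ge E[Y_{\overline{a}}]$.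
   Context: For $x\in\{a,\overline{a}\}$, $E[Y\mid x,D]$ is nondecreasing in $D$ if $E[Y\mid x,d]\ge E[Y\mid x,\overline{d}]$ and nonincreasing in $D$ if $E[Y\mid x,d]\le E[Y\mid x,\overline{d}]$. With $A$ coded as $a=1$, $\overline{a}=0$, $E[A\mid D]=p(a\mid D)$ is nondecreasing in $D$ if $p(a\mid d)\ge p(a\mid\overline{d})$ and nonincreasing if $p(a\mid d)\le p(a\mid\overline{d})$. $E[Y_x]$ is the causal effect on $Y$ of setting $A=x$ (expressed by the adjustment formula above). *)

theory Defs
  imports "HOL-Probability.Probability"
begin

text \<open>Events are given by predicates on the sample space. Binary variables are
  modelled as bool-valued random variables, with a = True, c = True, d = True.\<close>

definition pr :: "'a measure \<Rightarrow> ('a \<Rightarrow> bool) \<Rightarrow> real" where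
  "pr M P = measure M {\<omega> \<in> space M. P \<omega>}"

definition cprob :: "'a measure \<Rightarrow> ('a \<Rightarrow> bool) \<Rightarrow> ('a \<Rightarrow> bool) \<Rightarrow> real" where
  "cprob M P Q = pr M (\<lambda>\<omega>. P \<omega> \<and> Q \<omega>) / pr M Q"

definition cexp :: "'a measure \<Rightarrow> ('a \<Rightarrow> real) \<Rightarrow> ('a \<Rightarrow> bool) \<Rightarrow> real" where
  "cexp M Y Q = (LINT \<omega>:{\<omega> \<in> space M. Q \<omega>}|M. Y \<omega>) / pr M Q"

definition causal_eff :: "'a measure \<Rightarrow> ('a \<Rightarrow> bool) \<Rightarrow> ('a \<Rightarrow> bool) \<Rightarrow> ('a \<Rightarrow> real) \<Rightarrow> bool \<Rightarrow> real" where
  "causal_eff M A C Y x =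
     cexp M Y (\<lambda>\<omega>. A \<omega> = x \<and> C \<omega>) * pr M C
   + cexp M Y (\<lambda>\<omega>. A \<omega> = x \<and> \<not> C \<omega>) * pr M (\<lambda>\<omega>. \<not> C \<omega>)"

definition S_adjD :: "'a measure \<Rightarrow> ('a \<Rightarrow> bool) \<Rightarrow> ('a \<Rightarrow> bool) \<Rightarrow> ('a \<Rightarrow> real) \<Rightarrow> bool \<Rightarrow> real" where
  "S_adjD M A D Y x =
     cexp M Y (\<lambda>\<omega>. A \<omega> = x \<and> D \<omega>) * pr M D
   + cexp M Y (\<lambda>\<omega>. A \<omega> = x \<and> \<not> D \<omega>) * pr M (\<lambda>\<omega>. \<not> D \<omega>)"

definition S_obs :: "'a measure \<Rightarrow> ('a \<Rightarrow> bool) \<Rightarrow> ('a \<Rightarrow> real) \<Rightarrow> bool \<Rightarrow> real" where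
  "S_obs M A Y x = cexp M Y (\<lambda>\<omega>. A \<omega> = x)"

definition EY_nondec :: "'a measure \<Rightarrow> ('a \<Rightarrow> bool) \<Rightarrow> ('a \<Rightarrow> bool) \<Rightarrow> ('a \<Rightarrow> real) \<Rightarrow> bool \<Rightarrow> bool" where
  "EY_nondec M A D Y x \<longleftrightarrow>
     cexp M Y (\<lambda>\<omega>. A \<omega> = x \<and> D \<omega>) \<ge> cexp M Y (\<lambda>\<omega>. A \<omega> = x \<and> \<not> D \<omega>)"

definition EY_noninc :: "'a measure \<Rightarrow> ('a \<Rightarrow> bool) \<Rightarrow> ('a \<Rightarrow> bool) \<Rightarrow> ('a \<Rightarrow> real) \<Rightarrow> bool \<Rightarrow> bool" where
  "EY_noninc M A D Y x \<longleftrightarrow>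
     cexp M Y (\<lambda>\<omega>. A \<omega> = x \<and> D \<omega>) \<le> cexp M Y (\<lambda>\<omega>. A \<omega> = x \<and> \<not> D \<omega>)"

definition EA_nondec :: "'a measure \<Rightarrow> ('a \<Rightarrow> bool) \<Rightarrow> ('a \<Rightarrow> bool) \<Rightarrow> bool" where
  "EA_nondec M A D \<longleftrightarrow> cprob M A D \<ge> cprob M A (\<lambda>\<omega>. \<not> D \<omega>)"

definition EA_noninc :: "'a measure \<Rightarrow> ('a \<Rightarrow> bool) \<Rightarrow> ('a \<Rightarrow> bool) \<Rightarrow> bool" where
  "EA_noninc M A D \<longleftrightarrow> cprob M A D \<le> cprob M A (\<lambda>\<omega>. \<not> D \<omega>)"

end

theory Submission
  imports Defs
begin



lemma set_int_distr:
  fixes Y :: "'a \<Rightarrow> real"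
  assumes "prob_space M" "U \<in> sets M" "Y \<in> borel_measurable M"
  shows "(LINT \<omega>:U|M. Y \<omega>) = integral\<^sup>L (distr (density M (\<lambda>x. ennreal (indicator U x))) borel Y) (\<lambda>x. x)"
proof -
  have "integral\<^sup>L (distr (density M (\<lambda>x. ennreal (indicator U x))) borel Y) (\<lambda>x. x)
     = integral\<^sup>L (density M (\<lambda>x. ennreal (indicator U x))) Y"
    using integral_distr[of Y "density M (\<lambda>x. ennreal (indicator U x))" borel "\<lambda>x::real. x"]
    by (simp add: measurable_density_eq1 assms)
  also have "\<dots> = integral\<^sup>L M (\<lambda>x. indicator U x *\<^sub>R Y x)"
    by (rule integral_density) (auto simp: assms borel_measurable_indicator)
  finally show ?thesis unfolding set_lebesgue_integral_def by simp
qed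

lemma emeasure_distr_dens:
  assumes "prob_space M" "U \<in> sets M" "Y \<in> borel_measurable M" "B \<in> sets borel"
  shows "emeasure (distr (density M (\<lambda>x. ennreal (indicator U x))) borel Y) B
       = ennreal (measure M (U \<inter> Y -` B))"
proof -
  interpret prob_space M by fact
  have "emeasure (distr (density M (\<lambda>x. ennreal (indicator U x))) borel Y) B
      = emeasure (density M (\<lambda>x. ennreal (indicator U x))) (Y -` B \<inter> space M)"
    using emeasure_distr[of Y "density M (\<lambda>x. ennreal (indicator U x))" borel B]
    by (simp add: measurable_density_eq1 assms)
  also have "\<dots> = (\<integral>\<^sup>+ x. ennreal (indicator U x) * indicator (Y -` B \<inter> space M) x \<partial>M)"
    by (rule emeasure_density) (use assms in auto)
  also have "\<dots> = (\<integral>\<^sup>+ x. indicator (U \<inter> Y -` B) x \<partial>M)"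
    using sets.sets_into_space[OF assms(2)]
    by (intro nn_integral_cong) (auto simp: indicator_def)
  also have "\<dots> = emeasure M (U \<inter> Y -` B)"
  proof (rule nn_integral_indicator)
    have "U \<inter> Y -` B = U \<inter> (Y -` B \<inter> space M)" using sets.sets_into_space[OF assms(2)] by auto
    then show "U \<inter> Y -` B \<in> sets M" using assms by (metis sets.Int measurable_sets)
  qed
  finally show ?thesis by (simp add: emeasure_eq_measure)
qed

lemma scale_integral:
  fixes Y :: "'a \<Rightarrow> real"
  assumes "prob_space M" "S \<in> sets M" "T \<in> sets M" "Y \<in> borel_measurable M" "k \<ge> 0"
    and h: "\<And>B. B \<in> sets borel \<Longrightarrow> measure M (S \<inter> Y -` B) = k * measure M (T \<inter> Y -` B)"
  shows "(LINT \<omega>:S|M. Y \<omega>) = k * (LINT \<omega>:T|M. Y \<omega>)"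
proof -
  let ?N = "distr (density M (\<lambda>x. ennreal (indicator T x))) borel Y"
  have meq: "distr (density M (\<lambda>x. ennreal (indicator S x))) borel Y = density ?N (\<lambda>_. ennreal k)"
  proof (rule measure_eqI)
    fix B assume B: "B \<in> sets (distr (density M (\<lambda>x. ennreal (indicator S x))) borel Y)"
    then have B': "B \<in> sets borel" by simp
    have "emeasure (density ?N (\<lambda>_. ennreal k)) B = ennreal k * emeasure ?N B"
      by (rule emeasure_density_const) (use B' in simp)
    also have "\<dots> = ennreal k * ennreal (measure M (T \<inter> Y -` B))"
      using emeasure_distr_dens[OF assms(1,3,4) B'] by simp
    also have "\<dots> = ennreal (measure M (S \<inter> Y -` B))"
      using h[OF B'] assms(5) by (simp add: ennreal_mult)
    finally show "emeasure (distr (density M (\<lambda>x. ennreal (indicator S x))) borel Y) B = emeasure (density ?N (\<lambda>_. ennreal k)) B"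
      using emeasure_distr_dens[OF assms(1,2,4) B'] by simp
  qed simp
  have "(LINT \<omega>:S|M. Y \<omega>) = integral\<^sup>L (density ?N (\<lambda>_. ennreal k)) (\<lambda>x. x)"
    using set_int_distr[OF assms(1,2,4)] meq by simp
  also have "\<dots> = integral\<^sup>L ?N (\<lambda>x. k *\<^sub>R x)"
    by (rule integral_density) (use assms(5) in auto)
  also have "\<dots> = k * integral\<^sup>L ?N (\<lambda>x. x)" by simp
  also have "\<dots> = k * (LINT \<omega>:T|M. Y \<omega>)"
    using set_int_distr[OF assms(1,3,4)] by simp
  finally show ?thesis .
qed

lemma decomp:
  fixes f :: "'a \<Rightarrow> real" and A C D :: "'a \<Rightarrow> bool"
  assumes "prob_space M"
    and [measurable]: "A \<in> measurable M (count_space UNIV)"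
    "C \<in> measurable M (count_space UNIV)" "D \<in> measurable M (count_space UNIV)"
    and f: "integrable M f"
  shows "(LINT \<omega>:{\<omega>\<in>space M. R (A \<omega>) (C \<omega>) (D \<omega>)}|M. f \<omega>)
    = (\<Sum>x\<in>UNIV. \<Sum>y\<in>UNIV. \<Sum>z\<in>UNIV. if R x y z then
         (LINT \<omega>:{\<omega>\<in>space M. A \<omega> = x \<and> C \<omega> = y \<and> D \<omega> = z}|M. f \<omega>) else 0)"
proof -
  let ?E = "\<lambda>x y z. {\<omega>\<in>space M. A \<omega> = x \<and> C \<omega> = y \<and> D \<omega> = z}"
  have ev: "?E x y z \<in> sets M" for x y z by measurable
  have int: "integrable M (\<lambda>\<omega>. indicator (?E x y z) \<omega> *\<^sub>R f \<omega>)" for x y z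
    by (rule integrable_mult_indicator[OF ev f])
  have pw: "indicator {\<omega>\<in>space M. R (A \<omega>) (C \<omega>) (D \<omega>)} \<omega> *\<^sub>R f \<omega>
     = (\<Sum>x\<in>UNIV. \<Sum>y\<in>UNIV. \<Sum>z\<in>UNIV. if R x y z then indicator (?E x y z) \<omega> *\<^sub>R f \<omega> else 0)" for \<omega>
    apply (cases "\<omega> \<in> space M")
     apply (cases "A \<omega>"; cases "C \<omega>"; cases "D \<omega>")
    apply (simp_all add: UNIV_bool indicator_def)
    done
  have ifint: "integral\<^sup>L M (\<lambda>\<omega>. if b then g \<omega> else 0) = (if b then integral\<^sup>L M g else (0::real))" for b g
    by (cases b) auto
  have intif: "integrable M (\<lambda>\<omega>. if b then g \<omega> else 0)" if "integrable M g" for b and g :: "'a \<Rightarrow> real"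
    using that by (cases b) auto
  have i3: "integrable M (\<lambda>\<omega>. \<Sum>z\<in>UNIV. if R x y z then indicator (?E x y z) \<omega> *\<^sub>R f \<omega> else 0)" for x y
    by (intro Bochner_Integration.integrable_sum intif int)
  have i2: "integrable M (\<lambda>\<omega>. \<Sum>y\<in>UNIV. \<Sum>z\<in>UNIV. if R x y z then indicator (?E x y z) \<omega> *\<^sub>R f \<omega> else 0)" for x
    by (intro Bochner_Integration.integrable_sum i3)
  show ?thesis
    unfolding set_lebesgue_integral_def pw
    apply (subst Bochner_Integration.integral_sum, rule i2)
    apply (subst Bochner_Integration.integral_sum, rule i3)
    apply (subst Bochner_Integration.integral_sum, rule intif, rule int)
    apply (simp add: ifint)
    done
qed

lemma decomp_pr:
  fixes A C D :: "'a \<Rightarrow> bool"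
  assumes "prob_space M"
    and [measurable]: "A \<in> measurable M (count_space UNIV)"
    "C \<in> measurable M (count_space UNIV)" "D \<in> measurable M (count_space UNIV)"
  shows "pr M (\<lambda>\<omega>. R (A \<omega>) (C \<omega>) (D \<omega>))
    = (\<Sum>x\<in>UNIV. \<Sum>y\<in>UNIV. \<Sum>z\<in>UNIV. if R x y z then
         pr M (\<lambda>\<omega>. A \<omega> = x \<and> C \<omega> = y \<and> D \<omega> = z) else 0)"
proof -
  interpret prob_space M by fact
  have m: "pr M Q = (LINT \<omega>:{\<omega>\<in>space M. Q \<omega>}|M. (1::real))" if "{\<omega>\<in>space M. Q \<omega>} \<in> sets M" for Q
    using that unfolding pr_def set_lebesgue_integral_def
    by (simp add: Int_absorb2 sets.sets_into_space)
  have "{\<omega>\<in>space M. R (A \<omega>) (C \<omega>) (D \<omega>)} = {\<omega>\<in>space M. \<exists>x y z. R x y z \<and> A \<omega> = x \<and> C \<omega> = y \<and> D \<omega> = z}" by auto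
  also have "\<dots> \<in> sets M" by measurable
  finally have ev: "{\<omega>\<in>space M. R (A \<omega>) (C \<omega>) (D \<omega>)} \<in> sets M" .
  show ?thesis
    apply (subst m[OF ev])
    apply (subst decomp[OF assms, where f="\<lambda>_. 1"])
     apply simp
    apply (subst m)
    apply measurable
    done
qed



definition pDs :: "(bool \<Rightarrow> bool \<Rightarrow> bool \<Rightarrow> real) \<Rightarrow> bool \<Rightarrow> real" where
  "pDs P z = P True True z + P True False z + P False True z + P False False z"
definition pCs :: "(bool \<Rightarrow> bool \<Rightarrow> bool \<Rightarrow> real) \<Rightarrow> bool \<Rightarrow> real" where
  "pCs P y = P True y True + P True y False + P False y True + P False y False"
definition EYd :: "(bool \<Rightarrow> bool \<Rightarrow> bool \<Rightarrow> real) \<Rightarrow> (bool \<Rightarrow> bool \<Rightarrow> real) \<Rightarrow> bool \<Rightarrow> bool \<Rightarrow> real" where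
  "EYd P m x z = (P x True z * m x True + P x False z * m x False) / (P x True z + P x False z)"
definition EAd :: "(bool \<Rightarrow> bool \<Rightarrow> bool \<Rightarrow> real) \<Rightarrow> bool \<Rightarrow> real" where
  "EAd P z = (P True True z + P True False z) / pDs P z"
definition Sobs :: "(bool \<Rightarrow> bool \<Rightarrow> bool \<Rightarrow> real) \<Rightarrow> (bool \<Rightarrow> bool \<Rightarrow> real) \<Rightarrow> bool \<Rightarrow> real" where
  "Sobs P m x = (P x True True * m x True + P x True False * m x True + P x False True * m x False + P x False False * m x False)
     / (P x True True + P x True False + P x False True + P x False False)"
definition Sadj :: "(bool \<Rightarrow> bool \<Rightarrow> bool \<Rightarrow> real) \<Rightarrow> (bool \<Rightarrow> bool \<Rightarrow> real) \<Rightarrow> bool \<Rightarrow> real" where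
  "Sadj P m x = EYd P m x True * pDs P True + EYd P m x False * pDs P False"
definition Ceff :: "(bool \<Rightarrow> bool \<Rightarrow> bool \<Rightarrow> real) \<Rightarrow> (bool \<Rightarrow> bool \<Rightarrow> real) \<Rightarrow> bool \<Rightarrow> real" where
  "Ceff P m x = m x True * pCs P True + m x False * pCs P False"

lemma fixed_x:
  fixes pd pn q1 q0 r1 r0 s1 s0 :: real
  assumes r: "0 < pd" "0 < pn" "pd + pn = 1" "0 < q1" "q1 < 1" "0 < q0" "q0 < 1"
     "0 < r1" "r1 < 1" "0 < r0" "r0 < 1"
    and PF: "\<And>x y z. P x y z = (if z then pd else pn) * (if y then (if z then q1 else q0) else 1 - (if z then q1 else q0))
        * (if x then (if y then r1 else r0) else 1 - (if y then r1 else r0))"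
    and s1: "s1 = (if x then r1 else 1 - r1)" and s0: "s0 = (if x then r0 else 1 - r0)"
  shows "\<exists>K>0. EYd P m x True - EYd P m x False = (m x True - m x False) * (q1 - q0) * K"
    and "\<exists>K>0. Sadj P m x - Ceff P m x = (m x True - m x False) * (s1 - s0) * K"
    and "\<exists>K>0. Sobs P m x - Ceff P m x = (m x True - m x False) * (s1 - s0) * K"
    and "EAd P True - EAd P False = (q1 - q0) * (r1 - r0)"
proof -
  have s1p: "0 < s1" and s0p: "0 < s0" using s1 s0 r by auto
  have Px: "P x y z = (if z then pd else pn) * (if y then (if z then q1 else q0) else 1 - (if z then q1 else q0)) * (if y then s1 else s0)" for y z
    using PF[of x y z] s1 s0 by (cases x; cases y) auto
  define m1 m0 where "m1 = m x True" and "m0 = m x False"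
  define d1 d0 where "d1 = q1* s1 + (1-q1)* s0" and "d0 = q0* s1 + (1-q0)* s0"
  have d1p: "d1 > 0" unfolding d1_def using r s1p s0p by (intro add_pos_pos mult_pos_pos) auto
  have d0p: "d0 > 0" unfolding d0_def using r s1p s0p by (intro add_pos_pos mult_pos_pos) auto
  have pD: "pDs P z = (if z then pd else pn)" for z
    unfolding pDs_def using PF by (cases z) (simp_all add: algebra_simps)
  have pC: "pCs P True = pd*q1 + pn*q0" "pCs P False = pd*(1-q1) + pn*(1-q0)"
    unfolding pCs_def using PF by (simp_all add: algebra_simps)
  have eT: "EYd P m x True = (q1* s1*m1 + (1-q1)* s0*m0) / d1"
  proof -
    have "EYd P m x True = (pd*(q1* s1*m1 + (1-q1)* s0*m0)) / (pd*d1)"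
      unfolding EYd_def Px m1_def m0_def d1_def by (simp add: algebra_simps)
    then show ?thesis using r by simp
  qed
  have eF: "EYd P m x False = (q0* s1*m1 + (1-q0)* s0*m0) / d0"
  proof -
    have "EYd P m x False = (pn*(q0* s1*m1 + (1-q0)* s0*m0)) / (pn*d0)"
      unfolding EYd_def Px m1_def m0_def d0_def by (simp add: algebra_simps)
    then show ?thesis using r by simp
  qed
  have Ce: "Ceff P m x = m1 * (pd*q1 + pn*q0) + m0 * (pd*(1-q1) + pn*(1-q0))"
    unfolding Ceff_def pC m1_def m0_def ..
  show "\<exists>K>0. EYd P m x True - EYd P m x False = (m x True - m x False) * (q1 - q0) * K"
  proof (intro exI conjI)
    show "s1* s0/(d1*d0) > 0" using s1p s0p d1p d0p by simp
    show "EYd P m x True - EYd P m x False = (m x True - m x False) * (q1 - q0) * (s1* s0/(d1*d0))"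
      unfolding eT eF m1_def[symmetric] m0_def[symmetric] using d1p d0p
      by (simp add: field_simps, simp add: d1_def d0_def algebra_simps)
  qed
  show "\<exists>K>0. Sadj P m x - Ceff P m x = (m x True - m x False) * (s1 - s0) * K"
  proof (intro exI conjI)
    show "pd*q1*(1-q1)/d1 + pn*q0*(1-q0)/d0 > 0" using r d1p d0p by (intro add_pos_pos divide_pos_pos mult_pos_pos) auto
    show "Sadj P m x - Ceff P m x = (m x True - m x False) * (s1 - s0) * (pd*q1*(1-q1)/d1 + pn*q0*(1-q0)/d0)"
      unfolding Sadj_def eT eF Ce pD m1_def[symmetric] m0_def[symmetric] using d1p d0p
      by (simp add: field_simps, simp add: d1_def d0_def algebra_simps)
  qed
  show "\<exists>K>0. Sobs P m x - Ceff P m x = (m x True - m x False) * (s1 - s0) * K"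
  proof -
    define pc where "pc = pd*q1 + pn*q0"
    have a1: "pd*q1 < pd" using mult_strict_left_mono[of q1 1 pd] r by simp
    have a2: "pn*q0 < pn" using mult_strict_left_mono[of q0 1 pn] r by simp
    have pc1: "0 < pc" unfolding pc_def using r
      by (auto intro!: add_pos_pos mult_pos_pos)
    have pc2: "pc < 1" unfolding pc_def using r(3) a1 a2 by linarith
    note pc = pc1 pc2
    define px where "px = pc* s1 + (1-pc)* s0"
    have pxp: "px > 0" unfolding px_def using pc s1p s0p by (intro add_pos_pos mult_pos_pos) auto
    have so: "Sobs P m x = (pc* s1*m1 + (1-pc)* s0*m0) / px"
    proof -
      have h: "1 - pc = pd*(1-q1) + pn*(1-q0)" unfolding pc_def using r(3) by (simp add: algebra_simps)
      show ?thesis unfolding Sobs_def Px m1_def m0_def px_def h by (simp add: pc_def algebra_simps)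
    qed
    have Ce': "Ceff P m x = m1 * pc + m0 * (1 - pc)"
      unfolding Ce pc_def using r(3) by (simp add: algebra_simps)
    show ?thesis
    proof (intro exI conjI)
      show "pc*(1-pc)/px > 0" using pc pxp by simp
      show "Sobs P m x - Ceff P m x = (m x True - m x False) * (s1 - s0) * (pc*(1-pc)/px)"
        unfolding so Ce' m1_def[symmetric] m0_def[symmetric] using pxp
        by (simp add: field_simps, simp add: px_def algebra_simps)
    qed
  qed
  show "EAd P True - EAd P False = (q1 - q0) * (r1 - r0)"
    unfolding EAd_def pD using PF r by (simp add: field_simps; (simp add: algebra_simps)?)
qed

lemma sgn_help:
  fixes c K t pr df :: real
  assumes "c > 0" "K > 0" "pr = t * c" "df = t * K"
  shows "0 \<le> pr \<Longrightarrow> 0 \<le> df" and "pr \<le> 0 \<Longrightarrow> df \<le> 0"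
  using assms by (auto simp: zero_le_mult_iff mult_le_0_iff)

lemma signs:
  fixes P :: "bool \<Rightarrow> bool \<Rightarrow> bool \<Rightarrow> real" and m :: "bool \<Rightarrow> bool \<Rightarrow> real"
  assumes pos: "\<And>x y z. 0 < P x y z"
    and tot: "pDs P True + pDs P False = 1"
    and fac: "\<And>x y z. P x y z = (P True y z + P False y z) * (P x y True + P x y False) / pCs P y"
    and dep: "(P True True True + P False True True) / pDs P True \<noteq> (P True True False + P False True False) / pDs P False"
    and S: "S = Sadj P m \<or> S = Sobs P m"
  shows "0 \<le> (EYd P m x True - EYd P m x False) * (EAd P True - EAd P False) \<Longrightarrow>
           (if x then Ceff P m x \<le> S x else S x \<le> Ceff P m x)"
    and "(EYd P m x True - EYd P m x False) * (EAd P True - EAd P False) \<le> 0 \<Longrightarrow>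
           (if x then S x \<le> Ceff P m x else Ceff P m x \<le> S x)"
proof -
  define pd pn where "pd = pDs P True" and "pn = pDs P False"
  define q1 q0 where "q1 = (P True True True + P False True True) / pd"
    and "q0 = (P True True False + P False True False) / pn"
  define r1 r0 where "r1 = (P True True True + P True True False) / pCs P True"
    and "r0 = (P True False True + P True False False) / pCs P False"
  have pdp: "pd > 0" "pn > 0" unfolding pd_def pn_def pDs_def using pos by (auto intro!: add_pos_pos)
  have pcp: "pCs P y > 0" for y unfolding pCs_def using pos by (auto intro!: add_pos_pos)
  have pdpos: "pDs P z > 0" for z unfolding pDs_def using pos by (auto intro!: add_pos_pos)
  have r: "0 < pd" "0 < pn" "pd + pn = 1" "0 < q1" "q1 < 1" "0 < q0" "q0 < 1"
     "0 < r1" "r1 < 1" "0 < r0" "r0 < 1"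
    using pdp tot pos[of True True True] pos[of False True True] pos[of True False True] pos[of False False True]
      pos[of True True False] pos[of False True False] pos[of True False False] pos[of False False False]
      pcp[of True] pcp[of False]
    unfolding pd_def pn_def q1_def q0_def r1_def r0_def pDs_def pCs_def
    by (auto simp: field_simps)
  have c1: "P True y z + P False y z = (if z then pd else pn) * (if y then (if z then q1 else q0) else 1 - (if z then q1 else q0))" for y z
    using pdp unfolding q1_def q0_def pd_def pn_def
    by (cases y; cases z) (simp_all add: field_simps pDs_def)
  have c2: "(P x y True + P x y False) / pCs P y = (if x then (if y then r1 else r0) else 1 - (if y then r1 else r0))" for x y
    using pcp[of y] unfolding r1_def r0_def
    by (cases x; cases y) (simp_all add: field_simps pCs_def)
  have PF: "P x y z = (if z then pd else pn) * (if y then (if z then q1 else q0) else 1 - (if z then q1 else q0))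
        * (if x then (if y then r1 else r0) else 1 - (if y then r1 else r0))" for x y z
    using fac[of x y z] c1[of y z] c2[of x y] by (simp add: times_divide_eq_right[symmetric])
  have qne: "q1 \<noteq> q0" using dep unfolding q1_def q0_def pd_def pn_def .
  define s1 s0 where "s1 = (if x then r1 else 1 - r1)" and "s0 = (if x then r0 else 1 - r0)"
  note fx = fixed_x[OF r PF s1_def s0_def]
  obtain K1 where K1: "K1 > 0" "EYd P m x True - EYd P m x False = (m x True - m x False) * (q1 - q0) * K1"
    using fx(1) by blast
  obtain K where K: "K > 0" "S x - Ceff P m x = (m x True - m x False) * (s1 - s0) * K"
    using fx(2) fx(3) S by blast
  have ea: "EAd P True - EAd P False = (q1 - q0) * (r1 - r0)" by (rule fx(4))
  have c: "(q1 - q0)^2 * K1 > 0" using qne K1(1) by simp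
  have sd: "s1 - s0 = (if x then r1 - r0 else -(r1 - r0))" unfolding s1_def s0_def by auto
  let ?pr = "(EYd P m x True - EYd P m x False) * (EAd P True - EAd P False)"
  let ?t = "(m x True - m x False) * (s1 - s0)"
  have prod: "?pr = (if x then ?t * ((q1 - q0)^2 * K1) else - (?t * ((q1 - q0)^2 * K1)))"
    unfolding K1(2) ea s1_def s0_def by (cases x) (simp_all add: power2_eq_square algebra_simps)
  have df: "S x - Ceff P m x = ?t * K" using K(2) by simp
  show "0 \<le> ?pr \<Longrightarrow> (if x then Ceff P m x \<le> S x else S x \<le> Ceff P m x)"
  proof (cases x)
    case True
    assume h: "0 \<le> ?pr"
    have "0 \<le> S x - Ceff P m x"
      using sgn_help(1)[OF c K(1) _ df, of ?pr] prod h True by simp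
    then show ?thesis using True by simp
  next
    case False
    assume h: "0 \<le> ?pr"
    have "S x - Ceff P m x \<le> 0"
      using sgn_help(2)[OF c K(1) _ df, of "- ?pr"] prod h False by simp
    then show ?thesis using False by simp
  qed
  show "?pr \<le> 0 \<Longrightarrow> (if x then S x \<le> Ceff P m x else Ceff P m x \<le> S x)"
  proof (cases x)
    case True
    assume h: "?pr \<le> 0"
    have "S x - Ceff P m x \<le> 0"
      using sgn_help(2)[OF c K(1) _ df, of ?pr] prod h True by simp
    then show ?thesis using True by simp
  next
    case False
    assume h: "?pr \<le> 0"
    have "0 \<le> S x - Ceff P m x"
      using sgn_help(1)[OF c K(1) _ df, of "- ?pr"] prod h False by simp
    then show ?thesis using False by simp
  qed
qed


lemma bool_set_cases: "S = {} \<or> S = UNIV \<or> S = {True} \<or> S = {False}" for S :: "bool set"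
proof -
  consider (a) "True \<in> S" "False \<in> S" | (b) "True \<in> S" "False \<notin> S" | (c) "True \<notin> S" "False \<in> S" | (d) "True \<notin> S" "False \<notin> S" by blast
  then show ?thesis
  proof cases
    case a then have "S = UNIV" by (intro set_eqI) (case_tac x, auto)
    then show ?thesis by simp
  next
    case b then have "S = {True}" by (intro set_eqI) (case_tac x, auto)
    then show ?thesis by simp
  next
    case c then have "S = {False}" by (intro set_eqI) (case_tac x, auto)
    then show ?thesis by simp
  next
    case d then have "S = {}" by (intro set_eqI) (case_tac x, auto)
    then show ?thesis by simp
  qed
qed

lemma indep_bool:
  fixes C D :: "'a \<Rightarrow> bool"
  assumes "prob_space M"
    and [measurable]: "C \<in> measurable M (count_space UNIV)" "D \<in> measurable M (count_space UNIV)"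
    and h: "\<And>y z. measure M {\<omega>\<in>space M. C \<omega> = y \<and> D \<omega> = z}
                = measure M {\<omega>\<in>space M. C \<omega> = y} * measure M {\<omega>\<in>space M. D \<omega> = z}"
  shows "prob_space.indep_var M (count_space UNIV) C (count_space UNIV) D"
proof -
  interpret prob_space M by fact
  have sing: "X -` {y} \<inter> space M = {\<omega>\<in>space M. X \<omega> = y}" for X :: "'a \<Rightarrow> bool" and y by auto
  have key: "prob ((C -` S \<inter> space M) \<inter> (D -` S' \<inter> space M)) = prob (C -` S \<inter> space M) * prob (D -` S' \<inter> space M)"
    for S S' :: "bool set"
  proof -
    have evD: "D -` S' \<inter> space M \<in> events" by measurable
    have evC: "C -` S \<inter> space M \<in> events" by measurable
    consider "S = {}" | "S = UNIV" | y where "S = {y}"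
      using bool_set_cases[of S] by blast
    then show ?thesis
    proof cases
      case 1 then show ?thesis by simp
    next
      case 2 then show ?thesis using sets.sets_into_space[OF evD] by (simp add: Int_absorb1 prob_space)
    next
      case 3
      consider "S' = {}" | "S' = UNIV" | z where "S' = {z}"
        using bool_set_cases[of S'] by blast
      then show ?thesis
      proof cases
        case 1 then show ?thesis by simp
      next
        case 2 then show ?thesis using sets.sets_into_space[OF evC] by (simp add: Int_absorb2 prob_space)
      next
        case (3 z)
        have "(C -` S \<inter> space M) \<inter> (D -` S' \<inter> space M) = {\<omega>\<in>space M. C \<omega> = y \<and> D \<omega> = z}"
          using \<open>S = {y}\<close> 3 by auto
        then show ?thesis using h[of y z] \<open>S = {y}\<close> 3 sing by simp
      qed
    qed
  qed
  show ?thesis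
    unfolding indep_var_def indep_vars_def2
  proof (intro conjI ballI)
    fix i :: bool show "random_variable (case_bool (count_space UNIV) (count_space UNIV) i) (case_bool C D i)"
      by (cases i) simp_all
  next
    show "indep_sets (\<lambda>i. {case_bool C D i -` A \<inter> space M |A. A \<in> sets (case_bool (count_space UNIV) (count_space UNIV) i)}) UNIV"
    proof (rule indep_setsI)
      fix i :: bool
      show "{case_bool C D i -` A \<inter> space M |A. A \<in> sets (case_bool (count_space UNIV) (count_space UNIV) i)} \<subseteq> events"
        by (cases i) auto
    next
      fix A :: "bool \<Rightarrow> 'a set" and J :: "bool set"
      assume J: "J \<noteq> {}" "J \<subseteq> UNIV" "finite J"
        and A: "\<forall>j\<in>J. A j \<in> {case_bool C D j -` A \<inter> space M |A. A \<in> sets (case_bool (count_space UNIV) (count_space UNIV) j)}"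
      consider "J = UNIV" | j where "J = {j}" using bool_set_cases[of J] J(1) by blast
      then show "prob (\<Inter> (A ` J)) = (\<Prod>j\<in>J. prob (A j))"
      proof cases
        case 1
        obtain S where S: "A True = C -` S \<inter> space M" using bspec[OF A, of True] 1 by auto
        obtain S' where S': "A False = D -` S' \<inter> space M" using bspec[OF A, of False] 1 by auto
        show ?thesis using key[of S S'] 1 S S' by (simp add: UNIV_bool Int_commute mult.commute)
      next
        case (2 j)
        then show ?thesis by simp
      qed
    qed
  qed
qed

lemma four_indep:
  fixes a b c e :: real
  assumes "a > 0" "b > 0" "c > 0" "e > 0" "a + b + c + e = 1" "a / (a + c) = b / (b + e)"
  shows "a = (a+b)*(a+c)" "b = (a+b)*(b+e)" "c = (c+e)*(a+c)" "e = (c+e)*(b+e)"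
proof -
  have ae: "a*e = b*c" using assms(6) assms(1-4) by (simp add: field_simps; simp add: algebra_simps)
  have t: "a = a*(a+b+c+e)" "b = b*(a+b+c+e)" "c = c*(a+b+c+e)" "e = e*(a+b+c+e)" using assms(5) by simp_all
  show "a = (a+b)*(a+c)" "b = (a+b)*(b+e)" "c = (c+e)*(a+c)" "e = (c+e)*(b+e)"
    using t ae by (simp_all add: algebra_simps)
qed



lemma prod_sign:
  fixes a b c d :: real
  shows "(a \<le> b \<and> c \<le> d) \<or> (b \<le> a \<and> d \<le> c) \<Longrightarrow> 0 \<le> (b - a) * (d - c)"
    and "(a \<le> b \<and> d \<le> c) \<or> (b \<le> a \<and> c \<le> d) \<Longrightarrow> (b - a) * (d - c) \<le> 0"
  by (auto intro: mult_nonneg_nonneg mult_nonpos_nonpos mult_nonneg_nonpos mult_nonpos_nonneg)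

theorem corollary4:
  fixes M :: "'a measure" and A C D :: "'a \<Rightarrow> bool" and Y :: "'a \<Rightarrow> real"
  assumes "prob_space M"
    and "A \<in> measurable M (count_space UNIV)"
    and "C \<in> measurable M (count_space UNIV)"
    and "D \<in> measurable M (count_space UNIV)"
    and "Y \<in> borel_measurable M"
    and "integrable M Y"
    and factor: "\<And>x y z B. B \<in> sets borel \<Longrightarrow>
        pr M (\<lambda>\<omega>. A \<omega> = x \<and> C \<omega> = y \<and> D \<omega> = z \<and> Y \<omega> \<in> B)
        = pr M (\<lambda>\<omega>. D \<omega> = z)
          * cprob M (\<lambda>\<omega>. C \<omega> = y) (\<lambda>\<omega>. D \<omega> = z)
          * cprob M (\<lambda>\<omega>. A \<omega> = x) (\<lambda>\<omega>. C \<omega> = y)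
          * cprob M (\<lambda>\<omega>. Y \<omega> \<in> B) (\<lambda>\<omega>. A \<omega> = x \<and> C \<omega> = y)"
    and dep: "\<not> prob_space.indep_var M (count_space UNIV) C (count_space UNIV) D"
    and pos: "\<And>x y z. pr M (\<lambda>\<omega>. A \<omega> = x \<and> C \<omega> = y \<and> D \<omega> = z) > 0"
  shows "\<forall>S \<in> {S_adjD M A D Y, S_obs M A Y}.
     (((EY_nondec M A D Y True \<and> EA_nondec M A D) \<or> (EY_noninc M A D Y True \<and> EA_noninc M A D))
        \<longrightarrow> S True \<ge> causal_eff M A C Y True)
   \<and> (((EY_nondec M A D Y True \<and> EA_noninc M A D) \<or> (EY_noninc M A D Y True \<and> EA_nondec M A D))
        \<longrightarrow> S True \<le> causal_eff M A C Y True)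
   \<and> (((EY_nondec M A D Y False \<and> EA_nondec M A D) \<or> (EY_noninc M A D Y False \<and> EA_noninc M A D))
        \<longrightarrow> S False \<le> causal_eff M A C Y False)
   \<and> (((EY_nondec M A D Y False \<and> EA_noninc M A D) \<or> (EY_noninc M A D Y False \<and> EA_nondec M A D))
        \<longrightarrow> S False \<ge> causal_eff M A C Y False)"
proof -
  interpret prob_space M by fact
  note ms[measurable] = assms(2-5)
  define P where "P x y z = pr M (\<lambda>\<omega>. A \<omega> = x \<and> C \<omega> = y \<and> D \<omega> = z)" for x y z
  define m where "m x y = cexp M Y (\<lambda>\<omega>. A \<omega> = x \<and> C \<omega> = y)" for x y
  have pos': "0 < P x y z" for x y z using pos unfolding P_def .
  have dpP: "pr M (\<lambda>\<omega>. R (A \<omega>) (C \<omega>) (D \<omega>)) = (\<Sum>x\<in>UNIV. \<Sum>y\<in>UNIV. \<Sum>z\<in>UNIV. if R x y z then P x y z else 0)" for R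
    unfolding P_def by (rule decomp_pr[OF assms(1-4)])
  have prD: "pr M (\<lambda>\<omega>. D \<omega> = z) = pDs P z" for z
    using dpP[of "\<lambda>a c d. d = z"] by (cases z) (simp_all add: UNIV_bool pDs_def ac_simps)
  have prC: "pr M (\<lambda>\<omega>. C \<omega> = y) = pCs P y" for y
    using dpP[of "\<lambda>a c d. c = y"] by (cases y) (simp_all add: UNIV_bool pCs_def ac_simps)
  have prCD: "pr M (\<lambda>\<omega>. C \<omega> = y \<and> D \<omega> = z) = P True y z + P False y z" for y z
    using dpP[of "\<lambda>a c d. c = y \<and> d = z"] by (cases y; cases z) (simp_all add: UNIV_bool ac_simps)
  have prAC: "pr M (\<lambda>\<omega>. A \<omega> = x \<and> C \<omega> = y) = P x y True + P x y False" for x y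
    using dpP[of "\<lambda>a c d. a = x \<and> c = y"] by (cases x; cases y) (simp_all add: UNIV_bool ac_simps)
  have prAD: "pr M (\<lambda>\<omega>. A \<omega> = x \<and> D \<omega>) = P x True True + P x False True" for x
    using dpP[of "\<lambda>a c d. a = x \<and> d"] by (cases x) (simp_all add: UNIV_bool ac_simps)
  have prAnD: "pr M (\<lambda>\<omega>. A \<omega> = x \<and> \<not> D \<omega>) = P x True False + P x False False" for x
    using dpP[of "\<lambda>a c d. a = x \<and> \<not> d"] by (cases x) (simp_all add: UNIV_bool ac_simps)
  have prA: "pr M (\<lambda>\<omega>. A \<omega> = x) = P x True True + P x True False + P x False True + P x False False" for x
    using dpP[of "\<lambda>a c d. a = x"] by (cases x) (simp_all add: UNIV_bool ac_simps)
  have tot: "pDs P True + pDs P False = 1"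
  proof -
    have "pr M (\<lambda>\<omega>. True) = 1" unfolding pr_def by (simp add: prob_space)
    then show ?thesis using dpP[of "\<lambda>a c d. True"] by (simp add: UNIV_bool pDs_def ac_simps)
  qed
  have prACp: "pr M (\<lambda>\<omega>. A \<omega> = x \<and> C \<omega> = y) > 0" for x y
    unfolding prAC using pos'[of x y True] pos'[of x y False] by simp
  have fac1: "P x y z = pr M (\<lambda>\<omega>. D \<omega> = z) * cprob M (\<lambda>\<omega>. C \<omega> = y) (\<lambda>\<omega>. D \<omega> = z)
      * cprob M (\<lambda>\<omega>. A \<omega> = x) (\<lambda>\<omega>. C \<omega> = y)" for x y z
  proof -
    have one: "cprob M (\<lambda>\<omega>. Y \<omega> \<in> UNIV) (\<lambda>\<omega>. A \<omega> = x \<and> C \<omega> = y) = 1"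
      unfolding cprob_def using prACp[of x y] by simp
    show ?thesis using factor[of UNIV x y z] unfolding one P_def by simp
  qed
  have core: "(LINT \<omega>:{\<omega>\<in>space M. A \<omega> = x \<and> C \<omega> = y \<and> D \<omega> = z}|M. Y \<omega>) = P x y z * m x y" for x y z
  proof -
    let ?S = "{\<omega>\<in>space M. A \<omega> = x \<and> C \<omega> = y \<and> D \<omega> = z}"
    let ?T = "{\<omega>\<in>space M. A \<omega> = x \<and> C \<omega> = y}"
    let ?k = "P x y z / pr M (\<lambda>\<omega>. A \<omega> = x \<and> C \<omega> = y)"
    have S: "?S \<in> sets M" by measurable
    have T: "?T \<in> sets M" by measurable
    have k: "?k \<ge> 0" using pos'[of x y z] prACp[of x y] by simp
    have h: "measure M (?S \<inter> Y -` B) = ?k * measure M (?T \<inter> Y -` B)" if B: "B \<in> sets borel" for B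
    proof -
      have e1: "?S \<inter> Y -` B = {\<omega>\<in>space M. A \<omega> = x \<and> C \<omega> = y \<and> D \<omega> = z \<and> Y \<omega> \<in> B}" by auto
      have e2: "?T \<inter> Y -` B = {\<omega>\<in>space M. Y \<omega> \<in> B \<and> A \<omega> = x \<and> C \<omega> = y}" by auto
      show ?thesis
        using factor[OF B, of x y z] unfolding e1 e2 fac1[symmetric]
        by (simp add: cprob_def pr_def)
    qed
    have "(LINT \<omega>:?S|M. Y \<omega>) = ?k * (LINT \<omega>:?T|M. Y \<omega>)"
      by (rule scale_integral[OF assms(1) S T assms(5) k h])
    also have "\<dots> = P x y z * m x y"
      unfolding m_def cexp_def by simp
    finally show ?thesis .
  qed
  have dIP: "(LINT \<omega>:{\<omega>\<in>space M. R (A \<omega>) (C \<omega>) (D \<omega>)}|M. Y \<omega>)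
     = (\<Sum>x\<in>UNIV. \<Sum>y\<in>UNIV. \<Sum>z\<in>UNIV. if R x y z then P x y z * m x y else 0)" for R
    by (subst decomp[OF assms(1-4) assms(6)]) (simp only: core)
  have iAD: "(LINT \<omega>:{\<omega>\<in>space M. A \<omega> = x \<and> D \<omega>}|M. Y \<omega>) = P x True True * m x True + P x False True * m x False" for x
    using dIP[of "\<lambda>a c d. a = x \<and> d"] by (cases x) (simp_all add: UNIV_bool ac_simps)
  have iAnD: "(LINT \<omega>:{\<omega>\<in>space M. A \<omega> = x \<and> \<not> D \<omega>}|M. Y \<omega>) = P x True False * m x True + P x False False * m x False" for x
    using dIP[of "\<lambda>a c d. a = x \<and> \<not> d"] by (cases x) (simp_all add: UNIV_bool ac_simps)
  have iA: "(LINT \<omega>:{\<omega>\<in>space M. A \<omega> = x}|M. Y \<omega>) = P x True True * m x True + P x True False * m x True + P x False True * m x False + P x False False * m x False" for x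
    using dIP[of "\<lambda>a c d. a = x"] by (cases x) (simp_all add: UNIV_bool ac_simps)
  have E1: "cexp M Y (\<lambda>\<omega>. A \<omega> = x \<and> D \<omega>) = EYd P m x True" for x
    unfolding cexp_def iAD prAD EYd_def ..
  have E2: "cexp M Y (\<lambda>\<omega>. A \<omega> = x \<and> \<not> D \<omega>) = EYd P m x False" for x
    unfolding cexp_def iAnD prAnD EYd_def ..
  have E9: "cexp M Y (\<lambda>\<omega>. A \<omega> = x) = Sobs P m x" for x
    unfolding cexp_def iA prA Sobs_def ..
  have SA: "S_adjD M A D Y = Sadj P m"
  proof (rule ext)
    fix x
    have a: "pr M D = pDs P True" using prD[of True] by simp
    have b: "pr M (\<lambda>\<omega>. \<not> D \<omega>) = pDs P False" using prD[of False] by simp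
    show "S_adjD M A D Y x = Sadj P m x" unfolding S_adjD_def Sadj_def E1 E2 a b ..
  qed
  have SO: "S_obs M A Y = Sobs P m" by (rule ext) (simp only: S_obs_def E9)
  have CE: "causal_eff M A C Y x = Ceff P m x" for x
  proof -
    have a: "pr M C = pCs P True" using prC[of True] by simp
    have b: "pr M (\<lambda>\<omega>. \<not> C \<omega>) = pCs P False" using prC[of False] by simp
    have c: "cexp M Y (\<lambda>\<omega>. A \<omega> = x \<and> C \<omega>) = m x True" unfolding m_def by simp
    have d: "cexp M Y (\<lambda>\<omega>. A \<omega> = x \<and> \<not> C \<omega>) = m x False" unfolding m_def by simp
    show ?thesis unfolding causal_eff_def Ceff_def a b c d ..
  qed
  have EYn: "EY_nondec M A D Y x \<longleftrightarrow> EYd P m x False \<le> EYd P m x True" for x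
    unfolding EY_nondec_def E1 E2 ..
  have EYi: "EY_noninc M A D Y x \<longleftrightarrow> EYd P m x True \<le> EYd P m x False" for x
    unfolding EY_noninc_def E1 E2 ..
  have cpA: "cprob M A D = EAd P True" "cprob M A (\<lambda>\<omega>. \<not> D \<omega>) = EAd P False"
    using prAD[of True] prAnD[of True] prD[of True] prD[of False]
    by (simp_all add: cprob_def EAd_def)
  have EAn: "EA_nondec M A D \<longleftrightarrow> EAd P False \<le> EAd P True"
    unfolding EA_nondec_def cpA ..
  have EAi: "EA_noninc M A D \<longleftrightarrow> EAd P True \<le> EAd P False"
    unfolding EA_noninc_def cpA ..
  have fac: "P x y z = (P True y z + P False y z) * (P x y True + P x y False) / pCs P y" for x y z
  proof -
    have "pDs P z > 0" unfolding pDs_def using pos' by (intro add_pos_pos) auto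
    then show ?thesis using fac1[of x y z] unfolding cprob_def prD prC prCD prAC by simp
  qed
  have depP: "(P True True True + P False True True) / pDs P True \<noteq> (P True True False + P False True False) / pDs P False"
  proof
    assume eq: "(P True True True + P False True True) / pDs P True = (P True True False + P False True False) / pDs P False"
    define a b c e where "a = P True True True + P False True True" and "b = P True True False + P False True False"
      and "c = P True False True + P False False True" and "e = P True False False + P False False False"
    have abce: "a > 0" "b > 0" "c > 0" "e > 0" unfolding a_def b_def c_def e_def using pos' by (auto intro: add_pos_pos)
    have s1: "a + b + c + e = 1" using tot unfolding a_def b_def c_def e_def pDs_def by (simp add: ac_simps)
    have s2: "a / (a + c) = b / (b + e)" using eq unfolding a_def b_def c_def e_def pDs_def by (simp add: ac_simps)
    note fi = four_indep[OF abce s1 s2]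
    have h: "pr M (\<lambda>\<omega>. C \<omega> = y \<and> D \<omega> = z) = pr M (\<lambda>\<omega>. C \<omega> = y) * pr M (\<lambda>\<omega>. D \<omega> = z)" for y z
    proof -
      have cy: "pCs P y = (if y then a + b else c + e)" unfolding pCs_def a_def b_def c_def e_def by (cases y) (simp_all add: ac_simps)
      have dz: "pDs P z = (if z then a + c else b + e)" unfolding pDs_def a_def b_def c_def e_def by (cases z) (simp_all add: ac_simps)
      have cd: "P True y z + P False y z = (if y then (if z then a else b) else (if z then c else e))"
        unfolding a_def b_def c_def e_def by (cases y; cases z) simp_all
      show ?thesis unfolding prCD prC prD cy dz cd using fi by (cases y; cases z) simp_all
    qed
    have "prob_space.indep_var M (count_space UNIV) C (count_space UNIV) D"
      by (rule indep_bool[OF assms(1,3,4)]) (rule h[unfolded pr_def])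
    then show False using dep by simp
  qed
  have main: "(((EYd P m True False \<le> EYd P m True True \<and> EAd P False \<le> EAd P True) \<or> (EYd P m True True \<le> EYd P m True False \<and> EAd P True \<le> EAd P False))
        \<longrightarrow> Ceff P m True \<le> S True)
   \<and> (((EYd P m True False \<le> EYd P m True True \<and> EAd P True \<le> EAd P False) \<or> (EYd P m True True \<le> EYd P m True False \<and> EAd P False \<le> EAd P True))
        \<longrightarrow> S True \<le> Ceff P m True)
   \<and> (((EYd P m False False \<le> EYd P m False True \<and> EAd P False \<le> EAd P True) \<or> (EYd P m False True \<le> EYd P m False False \<and> EAd P True \<le> EAd P False))
        \<longrightarrow> S False \<le> Ceff P m False)
   \<and> (((EYd P m False False \<le> EYd P m False True \<and> EAd P True \<le> EAd P False) \<or> (EYd P m False True \<le> EYd P m False False \<and> EAd P False \<le> EAd P True))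
        \<longrightarrow> Ceff P m False \<le> S False)"
    if S: "S = Sadj P m \<or> S = Sobs P m" for S
  proof (intro conjI impI)
    note sg = signs[OF pos' tot fac depP S]
    show "Ceff P m True \<le> S True" if "(EYd P m True False \<le> EYd P m True True \<and> EAd P False \<le> EAd P True) \<or> (EYd P m True True \<le> EYd P m True False \<and> EAd P True \<le> EAd P False)"
      using sg(1)[of True] prod_sign(1)[OF that] by simp
    show "S True \<le> Ceff P m True" if "(EYd P m True False \<le> EYd P m True True \<and> EAd P True \<le> EAd P False) \<or> (EYd P m True True \<le> EYd P m True False \<and> EAd P False \<le> EAd P True)"
      using sg(2)[of True] prod_sign(2)[OF that] by simp
    show "S False \<le> Ceff P m False" if "(EYd P m False False \<le> EYd P m False True \<and> EAd P False \<le> EAd P True) \<or> (EYd P m False True \<le> EYd P m False False \<and> EAd P True \<le> EAd P False)"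
      using sg(1)[of False] prod_sign(1)[OF that] by simp
    show "Ceff P m False \<le> S False" if "(EYd P m False False \<le> EYd P m False True \<and> EAd P True \<le> EAd P False) \<or> (EYd P m False True \<le> EYd P m False False \<and> EAd P False \<le> EAd P True)"
      using sg(2)[of False] prod_sign(2)[OF that] by simp
  qed
  show ?thesis
    unfolding SA SO CE EYn EYi EAn EAi
    using main by blast
qed


end
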